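(* For any integer $m$ and $-\pi<\arg\zeta<\pi$, $$S_{-1,0}(\zeta\mathrm{e}^{-m\pi i})=S_{-1,0}(\zeta)+K''_+H^{(1)}_0(\zeta)+K''_-H^{(2)}_0(\zeta),\qquad K''_\pm=-\frac{m\pi^2(m\pm1)}{4}.$$
   Context: $J_0,Y_0$ are Bessel functions of order $0$, $H^{(1)}_0=J_0+iY_0$, $H^{(2)}_0=J_0-iY_0$, $\psi=\Gamma'/\Gamma$. The Lommel function $S_{-1,0}$ is defined by $S_{-1,0}(\zeta)=\frac12\sum_{k\ge0}\frac{(-1)^k(\zeta/2)^{2k}}{(k!)^2}\big\{[\log\frac{\zeta}{2}-\psi(k+1)]^2-\frac12\psi'(k+1)+\frac{\pi^2}{4}\big\}$. Right-hand side functions are on the principal branch $-\pi<\arg\zeta<\pi$; $g(\zeta\mathrm{e}^{-m\pi i})$ is the value of the analytic continuation of the principal branch at the point over $\zeta$ with argument $\arg\zeta-m\pi$. *)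

theory Defs
  imports "HOL-Analysis.Analysis"
begin

definition besselJ0 :: "complex \<Rightarrow> complex" where
  "besselJ0 z = (\<Sum>k. (-1)^k * (z/2)^(2*k) / (of_nat (fact k))^2)"

(* Functions with a logarithmic branch point are written in the logarithmic
   coordinate w (the point over zeta = exp w with arg zeta = Im w); this is the
   analytic continuation of the principal branch along the Riemann surface of log.
   log(zeta/2) on that sheet is  w - ln 2. *)

(* Y_0 (DLMF 10.8.2, n = 0):
   Y_0(z) = (2/pi) log(z/2) J_0(z) - (2/pi) sum_k psi(k+1) (-z^2/4)^k/(k!)^2 *)
definition besselY0_lc :: "complex \<Rightarrow> complex" where
  "besselY0_lc w = (2 / of_real pi) *
     ((w - of_real (ln 2)) * besselJ0 (exp w)
      - (\<Sum>k. of_real (Digamma (real (Suc k))) * (-1)^k * (exp w / 2)^(2*k)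
               / (of_nat (fact k))^2))"

definition besselY0 :: "complex \<Rightarrow> complex" where
  "besselY0 z = besselY0_lc (Ln z)"

definition hankel1_0 :: "complex \<Rightarrow> complex" where
  "hankel1_0 z = besselJ0 z + \<i> * besselY0 z"

definition hankel2_0 :: "complex \<Rightarrow> complex" where
  "hankel2_0 z = besselJ0 z - \<i> * besselY0 z"

definition lommelS_lc :: "complex \<Rightarrow> complex" where
  "lommelS_lc w = (1/2) * (\<Sum>k. (-1)^k * (exp w / 2)^(2*k) / (of_nat (fact k))^2 *
      ((w - of_real (ln 2) - of_real (Digamma (real (Suc k))))^2
       - of_real (Polygamma 1 (real (Suc k))) / 2 + of_real (pi^2) / 4))"

definition lommelS :: "complex \<Rightarrow> complex" where
  "lommelS z = lommelS_lc (Ln z)"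

end

theory Submission imports Defs begin

definition aa :: "complex \<Rightarrow> nat \<Rightarrow> complex" where
  "aa z k = (-1)^k * (z/2)^(2*k) / (of_nat (fact k))^2"

lemma two_pow_ge: "real k + 1 \<le> 2 ^ k"
proof (induction k)
  case (Suc k) then show ?case by simp
qed simp

lemma summable_aa:
  assumes "\<And>k. norm (c k) \<le> C * (real k + 1)^2"
  shows "summable (\<lambda>k. aa z k * c k)"
proof -
  define r where "r = norm (z/2)^2"
  define C' where "C' = max C 0"
  have r0: "r \<ge> 0" by (simp add: r_def)
  have g: "summable (\<lambda>k. C' * ((4*r)^k /\<^sub>R fact k))"
    using exp_converges[of "4*r"] by (intro summable_mult) (simp add: sums_iff)
  show ?thesis
  proof (rule summable_comparison_test[OF _ g], intro exI allI impI)
    fix k :: nat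
    have f1: "(1::real) \<le> fact k" by simp
    have nc: "norm (c k) \<le> C' * (real k + 1)^2"
      using assms[of k] mult_right_mono[of C C' "(real k + 1)^2"] unfolding C'_def
      by (meson max.cobounded1 order_trans zero_le_power2)
    have p: "(real k + 1)^2 \<le> 4^k"
    proof -
      have "(real k + 1)^2 \<le> (2^k)^2" using two_pow_ge[of k] by (intro power_mono) auto
      also have "\<dots> = 4^k" by (simp add: power2_eq_square flip: power_mult_distrib)
      finally show ?thesis .
    qed
    have nf: "norm (of_nat (fact k) :: complex) = fact k"
      by (metis norm_of_nat of_nat_fact)
    have "norm (aa z k * c k) = norm (z/2)^(2*k) / (fact k)^2 * norm (c k)"
      unfolding aa_def norm_mult norm_divide norm_power nf by simp
    also have "norm (z/2)^(2*k) = r^k" unfolding r_def by (simp add: power_mult)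
    finally have "norm (aa z k * c k) = r^k / (fact k)^2 * norm (c k)" .
    also have "\<dots> \<le> r^k / fact k * (C' * 4^k)"
    proof (rule mult_mono)
      show "r ^ k / (fact k)\<^sup>2 \<le> r ^ k / fact k"
        using f1 r0 by (intro divide_left_mono) (auto simp: power2_eq_square)
      show "norm (c k) \<le> C' * 4 ^ k" using nc mult_left_mono[OF p, of C'] unfolding C'_def by linarith
    qed (use r0 C'_def in auto)
    also have "\<dots> = C' * ((4*r)^k /\<^sub>R fact k)"
      by (simp add: power_mult_distrib divide_inverse_commute)
    finally show "norm (aa z k * c k) \<le> C' * ((4*r)^k /\<^sub>R fact k)" .
  qed
qed

lemma harm_le: "harm k \<le> real k"
proof -
  have "harm k = (\<Sum>j<k. inverse (real (Suc j)))" by (simp add: harm_altdef)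
  also have "\<dots> \<le> (\<Sum>j<k. 1)" by (intro sum_mono) (simp add: inverse_le_1_iff)
  finally show ?thesis by simp
qed

lemma psi_bound: "norm (complex_of_real (Digamma (real (Suc k)))) \<le> real k + \<bar>euler_mascheroni\<bar>"
proof -
  have "Digamma (real (Suc k)) = harm k - euler_mascheroni"
    using Digamma_of_nat[where 'a=real, of k] by simp
  moreover have "\<bar>harm k - euler_mascheroni\<bar> \<le> real k + \<bar>euler_mascheroni\<bar>"
    using harm_le[of k] harm_nonneg[of k, where 'a=real] by linarith
  ultimately show ?thesis by (simp only: norm_of_real)
qed

lemma P_bound: "norm (complex_of_real (Polygamma 1 (real (Suc k)))) \<le> Polygamma 1 1"
proof -
  have "Polygamma 1 (real (Suc k)) > 0"
    by (rule Polygamma_real_odd_pos) (auto elim!: nonpos_Ints_cases)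
  moreover have "Polygamma 1 (real (Suc k)) \<le> Polygamma 1 1"
  proof (cases k)
    case 0 then show ?thesis by simp
  next
    case (Suc j) then show ?thesis
      using Polygamma_real_strict_antimono[of 1 "real (Suc k)" 1] by simp
  qed
  ultimately show ?thesis by simp
qed

lemma lin_le_sq: "(a::real) \<ge> 0 \<Longrightarrow> real k + a \<le> (a + 1) * (real k + 1)^2"
proof -
  assume a: "a \<ge> 0"
  have "real k + a \<le> (a+1) * (real k + 1)" using a by (simp add: algebra_simps)
  also have "\<dots> \<le> (a+1) * (real k + 1)^2"
    using a by (intro mult_left_mono) (auto simp: power2_eq_square)
  finally show ?thesis .
qed

lemma summable_psi:
  "summable (\<lambda>k. aa z k * complex_of_real (Digamma (real (Suc k))))"
  by (rule summable_aa[where C="\<bar>euler_mascheroni\<bar> + 1"])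
     (meson psi_bound lin_le_sq abs_ge_zero order_trans)

lemma summable_one: "summable (\<lambda>k. aa z k)"
  using summable_aa[of "\<lambda>k. 1" 1 z] by simp

lemma summable_T:
  "summable (\<lambda>k. aa z k * ((L - complex_of_real (Digamma (real (Suc k))))^2
       - complex_of_real (Polygamma 1 (real (Suc k))) / 2 + complex_of_real (pi^2) / 4))"
proof (rule summable_aa[where C="(norm L + \<bar>euler_mascheroni\<bar> + 1)^2 + Polygamma 1 1 / 2 + pi^2/4"])
  fix k
  define a where "a = norm L + \<bar>euler_mascheroni\<bar>"
  have a0: "a \<ge> 0" by (simp add: a_def)
  have k1: "1 \<le> (real k + 1)^2" by simp
  have P1: "Polygamma 1 1 \<ge> (0::real)"
    using Polygamma_real_odd_pos[of 1 1] by simp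
  have n1: "norm (L - complex_of_real (Digamma (real (Suc k)))) \<le> real k + a"
    using norm_triangle_ineq4[of L "complex_of_real (Digamma (real (Suc k)))"] psi_bound[of k]
    unfolding a_def by linarith
  have "norm ((L - complex_of_real (Digamma (real (Suc k))))^2) \<le> (real k + a)^2"
    unfolding norm_power by (intro power_mono n1) simp
  also have "\<dots> \<le> ((a+1) * (real k + 1))^2"
    using a0 by (intro power_mono) (auto simp: algebra_simps)
  also have "\<dots> = (a+1)^2 * (real k + 1)^2" by (simp add: power_mult_distrib)
  finally have n2: "norm ((L - complex_of_real (Digamma (real (Suc k))))^2) \<le> (a+1)^2 * (real k + 1)^2" .
  have n3: "norm (complex_of_real (Polygamma 1 (real (Suc k))) / 2) \<le> Polygamma 1 1 / 2 * (real k + 1)^2"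
  proof -
    have "Polygamma 1 1 \<le> Polygamma 1 1 * (real k + 1)^2" using mult_left_mono[OF k1 P1] by simp
    then show ?thesis using P_bound[of k] by (simp add: norm_divide)
  qed
  have n4: "norm (complex_of_real (pi^2) / 4) \<le> pi^2/4 * (real k + 1)^2"
  proof -
    have "pi^2/4 \<le> pi^2/4 * (real k + 1)^2" using mult_left_mono[OF k1, of "pi^2/4"] by simp
    moreover have "norm (complex_of_real (pi^2) / 4) = pi^2/4"
      by (simp only: norm_divide norm_of_real) simp
    ultimately show ?thesis by simp
  qed
  have "norm ((L - complex_of_real (Digamma (real (Suc k))))^2
       - complex_of_real (Polygamma 1 (real (Suc k))) / 2 + complex_of_real (pi^2) / 4)
     \<le> norm ((L - complex_of_real (Digamma (real (Suc k))))^2)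
       + norm (complex_of_real (Polygamma 1 (real (Suc k))) / 2) + norm (complex_of_real (pi^2) / 4)"
    by (meson add_mono norm_triangle_ineq norm_triangle_ineq4 order_trans order_refl)
  also have "\<dots> \<le> ((a+1)^2 + Polygamma 1 1 / 2 + pi^2/4) * (real k + 1)^2"
    using n2 n3 n4 by (simp add: algebra_simps)
  finally show "norm ((L - complex_of_real (Digamma (real (Suc k))))^2
       - complex_of_real (Polygamma 1 (real (Suc k))) / 2 + complex_of_real (pi^2) / 4)
     \<le> ((norm L + \<bar>euler_mascheroni\<bar> + 1)^2 + Polygamma 1 1 / 2 + pi^2/4) * (real k + 1)^2"
    by (simp add: a_def)
qed

theorem lemma3p7:
  fixes m :: int and \<zeta> :: complex
  assumes "\<zeta> \<noteq> 0" and "- pi < Arg \<zeta>" and "Arg \<zeta> < pi"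
  shows "lommelS_lc (Ln \<zeta> - of_int m * of_real pi * \<i>) =
           lommelS \<zeta>
           + (- (of_int m * of_real (pi^2) * (of_int m + 1)) / 4) * hankel1_0 \<zeta>
           + (- (of_int m * of_real (pi^2) * (of_int m - 1)) / 4) * hankel2_0 \<zeta>"
proof -
  define w where "w = Ln \<zeta>"
  define L where "L = w - of_real (ln 2)"
  define u where "u = of_int m * of_real pi * \<i>"
  define psi where "psi = (\<lambda>k. complex_of_real (Digamma (real (Suc k))))"
  define P where "P = (\<lambda>k. complex_of_real (Polygamma 1 (real (Suc k))))"
  define T where "T = (\<lambda>L k. (L - psi k)^2 - P k / 2 + complex_of_real (pi^2) / 4)"
  have ew: "exp w = \<zeta>" using assms(1) by (simp add: w_def)
  have eu: "exp (- u) ^ 2 = 1"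
  proof -
    have "exp (- u) ^ 2 = exp (- u + - u)" by (simp only: power2_eq_square exp_add[symmetric])
    also have "- u + - u = complex_of_real (2 * real_of_int (- m) * pi) * \<i>"
      by (simp add: u_def)
    also have "exp \<dots> = 1" by (rule exp_integer_2pi) simp
    finally show ?thesis .
  qed
  have pw: "(exp (w - u) / 2)^(2*k) = (\<zeta>/2)^(2*k)" for k
  proof -
    have e: "exp (w - u) = exp w * exp (- u)" by (simp only: diff_conv_add_uminus exp_add)
    have "(exp (w - u) / 2)^2 = (exp w / 2)^2 * exp (- u) ^ 2"
      unfolding e by (simp add: power_mult_distrib power_divide)
    also have "\<dots> = (\<zeta>/2)^2" by (simp add: eu ew)
    finally show ?thesis by (simp only: power_mult)
  qed
  have lhs: "lommelS_lc (w - u) = (1/2) * (\<Sum>k. aa \<zeta> k * T (L - u) k)"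
    unfolding lommelS_lc_def pw T_def psi_def P_def L_def aa_def
    by (simp add: algebra_simps)
  have S: "lommelS \<zeta> = (1/2) * (\<Sum>k. aa \<zeta> k * T L k)"
    unfolding lommelS_def lommelS_lc_def w_def[symmetric] ew T_def psi_def P_def L_def aa_def
    by (simp add: algebra_simps)
  have J: "besselJ0 \<zeta> = (\<Sum>k. aa \<zeta> k)"
    unfolding besselJ0_def aa_def ..
  have Y: "besselY0 \<zeta> = (2 / of_real pi) * (L * besselJ0 \<zeta> - (\<Sum>k. aa \<zeta> k * psi k))"
    unfolding besselY0_def besselY0_lc_def w_def[symmetric] ew L_def psi_def aa_def
    by (simp add: algebra_simps)
  have tm: "aa \<zeta> k * T (L - u) k = aa \<zeta> k * T L k + (u^2 - 2*u*L) * aa \<zeta> k + (2*u) * (aa \<zeta> k * psi k)" for k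
    unfolding T_def by (simp add: power2_eq_square algebra_simps)
  have sT: "(\<lambda>k. aa \<zeta> k * T L k) sums (\<Sum>k. aa \<zeta> k * T L k)"
    using summable_T[of \<zeta> L] unfolding T_def psi_def P_def by (simp add: summable_sums)
  have sA: "(\<lambda>k. aa \<zeta> k) sums (\<Sum>k. aa \<zeta> k)"
    using summable_one by (simp add: summable_sums)
  have sB: "(\<lambda>k. aa \<zeta> k * psi k) sums (\<Sum>k. aa \<zeta> k * psi k)"
    using summable_psi unfolding psi_def by (simp add: summable_sums)
  have "(\<lambda>k. aa \<zeta> k * T (L - u) k) sums
     ((\<Sum>k. aa \<zeta> k * T L k) + (u^2 - 2*u*L) * (\<Sum>k. aa \<zeta> k) + (2*u) * (\<Sum>k. aa \<zeta> k * psi k))"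
    unfolding tm by (intro sums_add sums_mult sT sA sB)
  then have sum: "(\<Sum>k. aa \<zeta> k * T (L - u) k) =
     (\<Sum>k. aa \<zeta> k * T L k) + (u^2 - 2*u*L) * (\<Sum>k. aa \<zeta> k) + (2*u) * (\<Sum>k. aa \<zeta> k * psi k)"
    by (simp add: sums_iff)
  have pi0: "complex_of_real pi \<noteq> 0" by simp
  show ?thesis
    unfolding w_def[symmetric] u_def[symmetric] lhs sum S hankel1_0_def hankel2_0_def Y J
    using pi0 by (simp add: u_def field_simps power2_eq_square)
qed

end
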